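(* Let $\mu>0$, $U>0$ and $\delta>2\mu U^{-1}$. Let $\gamma$ be a density matrix on $\mathbb{C}^\Lambda$ with density $\rho(x)=\gamma_{x,x}$, $\Omega=\{x:\rho(x)<\delta\}$, $\Omega^c=\{x:\rho(x)\ge\delta\}$, and define $\tilde\rho(x)=\rho(x)$ for $x\in\Omega^c$ and $\tilde\rho(x)=\min\{\frac{\mu}{2U},\rho(x)\}$ for $x\in\Omega$ (viewed also as a diagonal multiplication operator). Then $$\mathrm{Tr}\{[K_\mu+U\tilde\rho]_-\}\ \ge\ \mathrm{Tr}\{[P_\Omega(K_\mu+U\tilde\rho)P_\Omega]_-\}-\frac{8d^2}{U\delta}\,|\partial\Omega|.$$
   Context: $\Lambda=\mathbb{Z}_L^d$; $T_{x,y}=1$ if $|x-y|_1=1$, else $0$; $\Delta_{x,y}=T_{x,y}-2d\delta_{x,y}$; $K_\mu=-\Delta-\mu$; $[X]_-=\min\{X,0\}$. $P_A$ denotes the orthogonal projection of $\mathbb{C}^\Lambda$ onto functions supported in $A\subseteq\Lambda$. $\partial\Omega=\{x\in\Omega:\mathrm{dist}_1(x,\Omega^c)=1\}$ with $\mathrm{dist}_1$ the graph distance; $|\partial\Omega|$ its cardinality. *)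

theory Defs
  imports "Jordan_Normal_Form.Schur_Decomposition" "HOL-Computational_Algebra.Polynomial"
begin

text \<open>The torus Lambda = (Z_L)^d is encoded by the index set {0..<L^d};
  index n corresponds to the point with coordinates (n div L^i) mod L, i < d.\<close>

definition lat_size :: "nat \<Rightarrow> nat \<Rightarrow> nat" where
  "lat_size L d = L ^ d"

definition coord :: "nat \<Rightarrow> nat \<Rightarrow> nat \<Rightarrow> nat" where
  "coord L i n = (n div L ^ i) mod L"

definition tdist :: "nat \<Rightarrow> nat \<Rightarrow> nat \<Rightarrow> nat \<Rightarrow> nat" where
  "tdist L d x y = (\<Sum>i<d. let a = coord L i x; b = coord L i y;
                              t = (if a \<le> b then b - a else a - b)
                          in min t (L - t))"

definition hop :: "nat \<Rightarrow> nat \<Rightarrow> complex mat" where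
  "hop L d = mat (lat_size L d) (lat_size L d)
      (\<lambda>(x, y). if tdist L d x y = 1 then 1 else 0)"

definition lap :: "nat \<Rightarrow> nat \<Rightarrow> complex mat" where
  "lap L d = hop L d - of_nat (2 * d) \<cdot>\<^sub>m 1\<^sub>m (lat_size L d)"

definition Kmu :: "nat \<Rightarrow> nat \<Rightarrow> real \<Rightarrow> complex mat" where
  "Kmu L d \<mu> = - lap L d - complex_of_real \<mu> \<cdot>\<^sub>m 1\<^sub>m (lat_size L d)"

definition proj :: "nat \<Rightarrow> nat set \<Rightarrow> complex mat" where
  "proj N A = mat N N (\<lambda>(x, y). if x = y \<and> x \<in> A then 1 else 0)"

definition mult_op :: "nat \<Rightarrow> (nat \<Rightarrow> real) \<Rightarrow> complex mat" where
  "mult_op N f = mat N N (\<lambda>(x, y). if x = y then complex_of_real (f x) else 0)"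

definition hermitian :: "complex mat \<Rightarrow> bool" where
  "hermitian A \<longleftrightarrow> mat_adjoint A = A"

definition density_matrix :: "nat \<Rightarrow> complex mat \<Rightarrow> bool" where
  "density_matrix N \<gamma> \<longleftrightarrow> \<gamma> \<in> carrier_mat N N \<and> hermitian \<gamma> \<and>
     (\<forall>v \<in> carrier_vec N. 0 \<le> Re (\<Sum>i<N. cnj (v $ i) * (\<gamma> *\<^sub>v v) $ i))"

text \<open>Tr [A]_- : sum of the negative parts of the eigenvalues of A
  (roots of the characteristic polynomial counted with multiplicity;
  they are real for hermitian A).\<close>
definition neg_trace :: "complex mat \<Rightarrow> real" where
  "neg_trace A = sum_mset (image_mset (\<lambda>z. min (Re z) 0) (proots (char_poly A)))"

definition bdry :: "nat \<Rightarrow> nat \<Rightarrow> nat set \<Rightarrow> nat set" where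
  "bdry L d \<Omega> = {x \<in> \<Omega>. {..<lat_size L d} - \<Omega> \<noteq> {} \<and>
       Min ((\<lambda>y. tdist L d x y) ` ({..<lat_size L d} - \<Omega>)) = 1}"

definition dens :: "complex mat \<Rightarrow> nat \<Rightarrow> real" where
  "dens \<gamma> x = Re (\<gamma> $$ (x, x))"

definition low_set :: "nat \<Rightarrow> complex mat \<Rightarrow> real \<Rightarrow> nat set" where
  "low_set N \<gamma> \<delta> = {x \<in> {..<N}. dens \<gamma> x < \<delta>}"

definition rho_tilde :: "nat \<Rightarrow> complex mat \<Rightarrow> real \<Rightarrow> real \<Rightarrow> real \<Rightarrow> nat \<Rightarrow> real" where
  "rho_tilde N \<gamma> \<delta> \<mu> U x =
     (if x \<in> low_set N \<gamma> \<delta> then min (\<mu> / (2 * U)) (dens \<gamma> x) else dens \<gamma> x)"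

end

theory Submission
  imports Defs
begin

lemma coord_Suc: "coord L (Suc i) y = coord L i (y div L)"
  unfolding coord_def by (simp add: div_mult2_eq mult.commute)

lemma coord_0: "coord L 0 y = y mod L"
  unfolding coord_def by simp

lemma digits_eq:
  "y < L^d \<Longrightarrow> y' < L^d \<Longrightarrow> (\<forall>i<d. coord L i y = coord L i y') \<Longrightarrow> y = y'"
proof (induction d arbitrary: y y')
  case 0
  then show ?case by simp
next
  case (Suc d)
  have L: "L > 0" using Suc.prems(1) by (cases L) auto
  have "y div L < L^d" using Suc.prems(1) L by (simp add: div_less_iff_less_mult mult.commute)
  moreover have "y' div L < L^d" using Suc.prems(2) L by (simp add: div_less_iff_less_mult mult.commute)
  moreover have "\<forall>i<d. coord L i (y div L) = coord L i (y' div L)"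
    using Suc.prems(3) by (auto simp: coord_Suc[symmetric])
  ultimately have "y div L = y' div L" using Suc.IH by blast
  moreover have "y mod L = y' mod L" using Suc.prems(3) coord_0 by (metis zero_less_Suc)
  ultimately show ?case by (metis div_mult_mod_eq)
qed

lemma coord_lt: "L > 0 \<Longrightarrow> coord L i y < L"
  unfolding coord_def by simp

definition tterm :: "nat \<Rightarrow> nat \<Rightarrow> nat \<Rightarrow> nat" where
  "tterm L a b = (let t = (if a \<le> b then b - a else a - b) in min t (L - t))"

lemma tdist_tterm: "tdist L d x y = (\<Sum>i<d. tterm L (coord L i x) (coord L i y))"
  unfolding tdist_def tterm_def by (simp add: Let_def)

lemma tterm_sym: "tterm L a b = tterm L b a"
  unfolding tterm_def Let_def by auto

lemma tdist_sym: "tdist L d x y = tdist L d y x"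
  unfolding tdist_tterm by (simp add: tterm_sym)

lemma tterm_0: "a < L \<Longrightarrow> b < L \<Longrightarrow> tterm L a b = 0 \<Longrightarrow> a = b"
  unfolding tterm_def Let_def by (auto split: if_splits)

lemma tterm_pos: "a < L \<Longrightarrow> b < L \<Longrightarrow> a \<noteq> b \<Longrightarrow> tterm L a b \<ge> 1"
  using tterm_0 by fastforce

lemma tterm_1: "a < L \<Longrightarrow> b < L \<Longrightarrow> tterm L a b = 1 \<Longrightarrow> b = (a + 1) mod L \<or> b = (a + L - 1) mod L"
proof -
  assume a: "a < L" and b: "b < L" and t: "tterm L a b = 1"
  show ?thesis
  proof (cases "a \<le> b")
    case True
    then have "min (b - a) (L - (b - a)) = 1" using t unfolding tterm_def Let_def by simp
    then have "b - a = 1 \<or> L - (b - a) = 1" by linarith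
    then show ?thesis
    proof
      assume "b - a = 1" then have "b = a + 1" by simp
      then show ?thesis using b by simp
    next
      assume "L - (b - a) = 1" then have "a = 0" "b = L - 1" using a b True by linarith+
      then show ?thesis using b by simp
    qed
  next
    case False
    then have "min (a - b) (L - (a - b)) = 1" using t unfolding tterm_def Let_def by simp
    then have "a - b = 1 \<or> L - (a - b) = 1" by linarith
    then show ?thesis
    proof
      assume "a - b = 1" then have "a + L - 1 = b + L" using False by simp
      then show ?thesis using b by simp
    next
      assume "L - (a - b) = 1" then have "b = 0" "a + 1 = L" using a b False by linarith+
      then show ?thesis by simp
    qed
  qed
qed

lemma nbr_structure:
  assumes L: "L > 0" and t: "tdist L d x y = 1"
  shows "\<exists>i<d. tterm L (coord L i x) (coord L i y) = 1 \<and> (\<forall>j<d. j \<noteq> i \<longrightarrow> coord L j y = coord L j x)"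
proof -
  define f where "f i = tterm L (coord L i x) (coord L i y)" for i
  have s: "sum f {..<d} = 1" using t unfolding f_def tdist_tterm .
  then obtain i where i: "i < d" "f i \<noteq> 0"
    by (metis lessThan_iff sum.neutral zero_neq_one)
  have fi: "f i \<le> 1" using member_le_sum[of i "{..<d}" f] i s by simp
  have rest: "coord L j y = coord L j x" if j: "j < d" "j \<noteq> i" for j
  proof -
    have "sum f {i, j} \<le> sum f {..<d}" by (rule sum_mono2) (use i j in auto)
    then have "f i + f j \<le> 1" using j s by simp
    then have "f j = 0" using i by simp
    then show ?thesis using tterm_0[OF coord_lt[OF L] coord_lt[OF L]] unfolding f_def by metis
  qed
  show ?thesis using i fi rest unfolding f_def by (intro exI[of _ i]) auto
qed

lemma card_nbrs: "card {y\<in>{..<lat_size L d}. tdist L d x y = 1} \<le> 2 * d"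
proof (cases "L > 0 \<and> d > 0")
  case False
  then have e: "{y\<in>{..<lat_size L d}. tdist L d x y = 1} = {}"
    unfolding lat_size_def tdist_def by auto
  show ?thesis by (subst e) simp
next
  case True
  then have L: "L > 0" by simp
  define N where "N = lat_size L d"
  define A where "A i b = {y\<in>{..<N}. coord L i y = b \<and> (\<forall>j<d. j \<noteq> i \<longrightarrow> coord L j y = coord L j x)}" for i b
  define B where "B i = {(coord L i x + 1) mod L, (coord L i x + L - 1) mod L}" for i
  have sub: "{y\<in>{..<N}. tdist L d x y = 1} \<subseteq> (\<Union>i\<in>{..<d}. \<Union>b\<in>B i. A i b)"
  proof
    fix y assume y: "y \<in> {y\<in>{..<N}. tdist L d x y = 1}"
    then obtain i where i: "i < d" "tterm L (coord L i x) (coord L i y) = 1" "\<forall>j<d. j \<noteq> i \<longrightarrow> coord L j y = coord L j x"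
      using nbr_structure[OF L] by blast
    have "coord L i y \<in> B i" using tterm_1[OF coord_lt[OF L] coord_lt[OF L] i(2)] unfolding B_def by auto
    then show "y \<in> (\<Union>i\<in>{..<d}. \<Union>b\<in>B i. A i b)" using i y unfolding A_def by auto
  qed
  have cA: "card (A i b) \<le> 1" for i b
  proof -
    have "\<forall>y\<in>A i b. \<forall>y'\<in>A i b. y = y'"
    proof (intro ballI)
      fix y y' assume "y \<in> A i b" "y' \<in> A i b"
      then show "y = y'" unfolding A_def N_def lat_size_def
        by (intro digits_eq[of y L d y']) (auto, metis)
    qed
    moreover have "finite (A i b)" unfolding A_def by simp
    ultimately show ?thesis by (simp add: card_le_Suc0_iff_eq)
  qed
  have fA: "finite (A i b)" for i b unfolding A_def by simp
  have "card {y\<in>{..<N}. tdist L d x y = 1} \<le> card (\<Union>i\<in>{..<d}. \<Union>b\<in>B i. A i b)"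
    by (rule card_mono) (use fA sub in \<open>auto simp: B_def\<close>)
  also have "\<dots> \<le> (\<Sum>i<d. card (\<Union>b\<in>B i. A i b))" by (rule card_UN_le) simp
  also have "\<dots> \<le> (\<Sum>i<d. 2)"
  proof (rule sum_mono)
    fix i
    have "card (\<Union>b\<in>B i. A i b) \<le> (\<Sum>b\<in>B i. card (A i b))" by (rule card_UN_le) (simp add: B_def)
    also have "\<dots> \<le> (\<Sum>b\<in>B i. 1)" by (rule sum_mono) (rule cA)
    also have "\<dots> \<le> 2" by (simp add: B_def card_insert_le_m1)
    finally show "card (\<Union>b\<in>B i. A i b) \<le> 2" .
  qed
  finally show ?thesis unfolding N_def by simp
qed

lemma tdist_pos:
  assumes "x < lat_size L d" "y < lat_size L d" "x \<noteq> y"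
  shows "tdist L d x y \<ge> 1"
proof -
  have L: "L > 0" using assms unfolding lat_size_def by (cases L; cases d) auto
  obtain i where i: "i < d" "coord L i x \<noteq> coord L i y"
    using digits_eq[of x L d y] assms unfolding lat_size_def by auto
  have "1 \<le> tterm L (coord L i x) (coord L i y)" by (rule tterm_pos[OF coord_lt[OF L] coord_lt[OF L] i(2)])
  also have "\<dots> \<le> tdist L d x y" unfolding tdist_tterm
    by (rule member_le_sum[of i "{..<d}" "\<lambda>i. tterm L (coord L i x) (coord L i y)"]) (use i in auto)
  finally show ?thesis .
qed

lemma in_bdry:
  assumes "\<Omega> \<subseteq> {..<lat_size L d}" "x \<in> \<Omega>" "y < lat_size L d" "y \<notin> \<Omega>" "tdist L d x y = 1"
  shows "x \<in> bdry L d \<Omega>"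
proof -
  let ?C = "{..<lat_size L d} - \<Omega>"
  have ne: "?C \<noteq> {}" using assms by auto
  have fin: "finite ((\<lambda>y. tdist L d x y) ` ?C)" by simp
  have "1 \<in> (\<lambda>y. tdist L d x y) ` ?C" using assms by (metis DiffI image_eqI lessThan_iff)
  then have "Min ((\<lambda>y. tdist L d x y) ` ?C) \<le> 1"
    using Min_le[OF fin, of 1] by blast
  moreover have "Min ((\<lambda>y. tdist L d x y) ` ?C) \<ge> 1"
  proof (rule Min.boundedI)
    show "finite ((\<lambda>y. tdist L d x y) ` ?C)" by simp
    show "(\<lambda>y. tdist L d x y) ` ?C \<noteq> {}" using ne by simp
    fix a assume "a \<in> (\<lambda>y. tdist L d x y) ` ?C"
    then obtain y' where y': "y' \<in> ?C" "a = tdist L d x y'" by auto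
    have "x < lat_size L d" using assms by auto
    moreover have "y' \<noteq> x" using y' assms by auto
    ultimately show "1 \<le> a" using tdist_pos[of x L d y'] y' by auto
  qed
  ultimately have "Min ((\<lambda>y. tdist L d x y) ` ?C) = 1" by (rule antisym)
  then show ?thesis unfolding bdry_def using assms ne by auto
qed


definition adj :: "complex mat \<Rightarrow> complex mat" where
  "adj A = mat (dim_col A) (dim_row A) (\<lambda>(i,j). cnj (A $$ (j,i)))"

lemma adj_carrier[simp]: "A \<in> carrier_mat m n \<Longrightarrow> adj A \<in> carrier_mat n m"
  unfolding adj_def by auto

lemma adj_dims[simp]: "dim_row (adj A) = dim_col A" "dim_col (adj A) = dim_row A"
  unfolding adj_def by auto

lemma adj_index[simp]: "i < dim_col A \<Longrightarrow> j < dim_row A \<Longrightarrow> adj A $$ (i,j) = cnj (A $$ (j,i))"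
  unfolding adj_def by auto

lemma mult_index: "A \<in> carrier_mat m n \<Longrightarrow> B \<in> carrier_mat n p \<Longrightarrow> i < m \<Longrightarrow> j < p \<Longrightarrow>
  (A * B) $$ (i,j) = (\<Sum>k<n. A $$ (i,k) * B $$ (k,j))"
  by (auto simp: scalar_prod_def atLeast0LessThan intro!: sum.cong)

lemma adj_mult: assumes "A \<in> carrier_mat m n" "B \<in> carrier_mat n p"
  shows "adj (A * B) = adj B * adj A"
proof (rule eq_matI)
  fix i j assume ij: "i < dim_row (adj B * adj A)" "j < dim_col (adj B * adj A)"
  then have i: "i < p" and j: "j < m" using assms by auto
  have "adj (A * B) $$ (i,j) = cnj ((A * B) $$ (j,i))" using i j assms by simp
  also have "\<dots> = (\<Sum>k<n. cnj (A $$ (j,k)) * cnj (B $$ (k,i)))" using i j assms by (subst mult_index[of A m n B p]) (auto simp: cnj_sum)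
  also have "\<dots> = (adj B * adj A) $$ (i,j)"
    using i j assms by (subst mult_index[of _ p n _ m]) (auto simp: mult.commute intro!: sum.cong)
  finally show "adj (A * B) $$ (i, j) = (adj B * adj A) $$ (i, j)" .
qed (use assms in auto)

lemma adj_adj[simp]: "adj (adj A) = A"
  unfolding adj_def by (rule eq_matI) auto

lemma triple_index:
  assumes X: "X \<in> carrier_mat n m" and Y: "Y \<in> carrier_mat n n" and i: "i < m" and j: "j < m"
  shows "(adj X * Y * X) $$ (i,j) = (\<Sum>k<n. \<Sum>l<n. cnj (X $$ (k,i)) * Y $$ (k,l) * X $$ (l,j))"
proof -
  have "(adj X * Y * X) $$ (i,j) = (\<Sum>l<n. (adj X * Y) $$ (i,l) * X $$ (l,j))"
    using assms by (intro mult_index[of _ m n]) auto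
  also have "\<dots> = (\<Sum>l<n. (\<Sum>k<n. cnj (X $$ (k,i)) * Y $$ (k,l)) * X $$ (l,j))"
    using assms by (intro sum.cong refl) (subst mult_index[of _ m n _ n], auto)
  also have "\<dots> = (\<Sum>k<n. \<Sum>l<n. cnj (X $$ (k,i)) * Y $$ (k,l) * X $$ (l,j))"
    by (simp add: sum_distrib_right) (rule sum.swap)
  finally show ?thesis .
qed

lemma unitary_right:
  assumes "U \<in> carrier_mat n n" "adj U * U = 1\<^sub>m n"
  shows "U * adj U = 1\<^sub>m n"
  using mat_mult_left_right_inverse[of "adj U" n U] assms by auto

lemma unitary_mult:
  assumes U: "U \<in> carrier_mat n n" "adj U * U = 1\<^sub>m n" and V: "V \<in> carrier_mat n n" "adj V * V = 1\<^sub>m n"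
  shows "adj (U * V) * (U * V) = 1\<^sub>m n"
proof -
  have "adj (U * V) * (U * V) = (adj V * adj U) * (U * V)"
    using U V by (simp add: adj_mult)
  also have "\<dots> = adj V * (adj U * (U * V))"
    using U V by (intro assoc_mult_mat[of _ n n _ n _ n]) auto
  also have "\<dots> = adj V * ((adj U * U) * V)"
    using U V by (subst assoc_mult_mat[of _ n n _ n _ n]) auto
  also have "\<dots> = adj V * V"
    using U V by simp
  also have "\<dots> = 1\<^sub>m n" using U V by simp
  finally show ?thesis .
qed

lemma self_cprod: assumes "v \<in> carrier_vec n" shows "v \<bullet>c v = of_real (\<Sum>k<n. cmod (v $ k)^2)"
proof -
  have "v \<bullet>c v = (\<Sum>k<n. v$k * cnj(v$k))" using assms by (auto simp: scalar_prod_def atLeast0LessThan)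
  also have "\<dots> = (\<Sum>k<n. of_real (cmod (v$k)^2))" by (intro sum.cong refl) (metis complex_norm_square)
  finally show ?thesis by (simp only: of_real_sum)
qed

lemma onb_extend:
  assumes v: "v \<in> carrier_vec n" and nv: "(\<Sum>k<n. cmod (v $ k)^2) = 1"
  shows "\<exists>W. W \<in> carrier_mat n n \<and> adj W * W = 1\<^sub>m n \<and> (\<forall>k<n. W $$ (k,0) = v $ k)"
proof -
  have n: "n > 0" using nv by (cases n) auto
  have v0: "v \<noteq> 0\<^sub>v n" using nv by auto
  interpret cof_vec_space n "TYPE(complex)" .
  define b where "b = basis_completion v"
  note bc = basis_completion[OF v v0, folded b_def]
  define ws where "ws = gram_schmidt n b"
  note gs = gram_schmidt_result[OF bc(2) bc(4) bc(5) ws_def]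
  from bc(6,7) n obtain vs where bv: "b = v # vs" by (cases b) auto
  have hdws: "hd ws = v" unfolding ws_def bv using v by simp
  have lws: "length ws = n" using gs bc by simp
  have ws0: "ws ! 0 = v" using hdws lws n by (cases ws) auto
  have wsc: "ws ! i \<in> carrier_vec n" if "i < n" for i using gs(3) lws that by auto
  define nw where "nw i = sqrt (\<Sum>k<n. cmod (ws ! i $ k)^2)" for i
  have nwpos: "nw i > 0" if i: "i < n" for i
  proof -
    have "ws ! i \<bullet>c ws ! i \<noteq> 0" using gs(2) i lws by (auto dest: corthogonalD)
    then have "(\<Sum>k<n. cmod (ws ! i $ k)^2) \<noteq> 0" using self_cprod[OF wsc[OF i]] by (metis of_real_0)
    moreover have "(\<Sum>k<n. cmod (ws ! i $ k)^2) \<ge> 0" by (intro sum_nonneg) auto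
    ultimately show ?thesis unfolding nw_def by auto
  qed
  have nwsq: "(nw i)^2 = (\<Sum>k<n. cmod (ws ! i $ k)^2)" for i
    unfolding nw_def by (simp add: sum_nonneg)
  have nw0: "nw 0 = 1" unfolding nw_def ws0 nv by simp
  define W where "W = mat n n (\<lambda>(k,i). ws ! i $ k / of_real (nw i))"
  have Wc: "W \<in> carrier_mat n n" unfolding W_def by simp
  have "adj W * W = 1\<^sub>m n"
  proof (rule eq_matI)
    fix i j assume "i < dim_row (1\<^sub>m n)" "j < dim_col (1\<^sub>m n)"
    then have i: "i < n" and j: "j < n" by auto
    have "(adj W * W) $$ (i,j) = (\<Sum>k<n. cnj (W $$ (k,i)) * W $$ (k,j))"
      using Wc i j by (subst mult_index[of _ n n _ n]) auto
    also have "\<dots> = (\<Sum>k<n. ws ! j $ k * cnj (ws ! i $ k)) / (of_real (nw i) * of_real (nw j))"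
      unfolding W_def using i j by (auto simp: sum_divide_distrib intro!: sum.cong)
    also have "(\<Sum>k<n. ws ! j $ k * cnj (ws ! i $ k)) = ws ! j \<bullet>c ws ! i"
      using wsc[OF i] wsc[OF j] by (auto simp: scalar_prod_def atLeast0LessThan intro!: sum.cong)
    finally have e: "(adj W * W) $$ (i,j) = ws ! j \<bullet>c ws ! i / (of_real (nw i) * of_real (nw j))" .
    show "(adj W * W) $$ (i,j) = 1\<^sub>m n $$ (i,j)"
    proof (cases "i = j")
      case True
      have "ws ! j \<bullet>c ws ! i = of_real ((nw i)^2)" using True self_cprod[OF wsc[OF i]] nwsq by simp
      then show ?thesis using e True i nwpos[OF i] by (simp add: power2_eq_square)
    next
      case False
      have "ws ! j \<bullet>c ws ! i = 0" using gs(2) i j lws False by (auto dest: corthogonalD)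
      then show ?thesis using e False i j by simp
    qed
  qed (use Wc in auto)
  moreover have "\<forall>k<n. W $$ (k,0) = v $ k" unfolding W_def using n ws0 nw0 by simp
  ultimately show ?thesis using Wc by blast
qed

definition herm :: "nat \<Rightarrow> complex mat \<Rightarrow> bool" where
  "herm n A \<longleftrightarrow> (\<forall>i<n. \<forall>j<n. A $$ (j,i) = cnj (A $$ (i,j)))"

lemma herm_triple:
  assumes X: "X \<in> carrier_mat n m" and A: "A \<in> carrier_mat n n" and h: "herm n A"
  shows "herm m (adj X * A * X)"
  unfolding herm_def
proof (intro allI impI)
  fix i j assume i: "i < m" and j: "j < m"
  have "(adj X * A * X) $$ (j,i) = (\<Sum>k<n. \<Sum>l<n. cnj (X $$ (k,j)) * A $$ (k,l) * X $$ (l,i))"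
    by (rule triple_index[OF X A j i])
  also have "\<dots> = (\<Sum>l<n. \<Sum>k<n. cnj (X $$ (k,j)) * A $$ (k,l) * X $$ (l,i))" by (rule sum.swap)
  also have "\<dots> = (\<Sum>l<n. \<Sum>k<n. cnj (cnj (X $$ (l,i)) * A $$ (l,k) * X $$ (k,j)))"
  proof (intro sum.cong refl)
    fix l k assume "l \<in> {..<n}" "k \<in> {..<n}"
    then have "A $$ (k,l) = cnj (A $$ (l,k))" using h unfolding herm_def by blast
    then show "cnj (X $$ (k,j)) * A $$ (k,l) * X $$ (l,i) = cnj (cnj (X $$ (l,i)) * A $$ (l,k) * X $$ (k,j))"
      by (simp add: mult.commute mult.left_commute)
  qed
  also have "\<dots> = cnj ((adj X * A * X) $$ (i,j))"
    by (simp add: triple_index[OF X A i j] cnj_sum)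
  finally show "(adj X * A * X) $$ (j,i) = cnj ((adj X * A * X) $$ (i,j))" .
qed


lemma unit_eigvec:
  fixes A :: "complex mat"
  assumes A: "A \<in> carrier_mat n n" and n: "n > 0"
  shows "\<exists>v e. v \<in> carrier_vec n \<and> (\<Sum>k<n. cmod (v $ k)^2) = 1 \<and> (\<forall>k<n. (\<Sum>l<n. A $$ (k,l) * v $ l) = e * v $ k)"
proof -
  obtain as where cp: "char_poly A = (\<Prod>a\<leftarrow>as. [:- a, 1:])" and las: "length as = n"
    using char_poly_factorized[OF A] by blast
  from las n obtain e as' where as: "as = e # as'" by (cases as) auto
  have "poly (char_poly A) e = 0" unfolding cp as by simp
  then have "eigenvalue A e" using eigenvalue_root_char_poly[OF A] by simp
  then obtain v0 where "eigenvector A v0 e" unfolding eigenvalue_def by blast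
  then have v0: "v0 \<in> carrier_vec n" "v0 \<noteq> 0\<^sub>v n" "A *\<^sub>v v0 = e \<cdot>\<^sub>v v0"
    unfolding eigenvector_def using A by auto
  have ev0: "(\<Sum>l<n. A $$ (k,l) * v0 $ l) = e * v0 $ k" if k: "k < n" for k
  proof -
    have "(A *\<^sub>v v0) $ k = e * v0 $ k" using v0 k by simp
    moreover have "(A *\<^sub>v v0) $ k = (\<Sum>l<n. A $$ (k,l) * v0 $ l)"
      using A v0(1) k by (auto simp: scalar_prod_def atLeast0LessThan intro!: sum.cong)
    ultimately show ?thesis by simp
  qed
  define s where "s = (\<Sum>k<n. cmod (v0 $ k)^2)"
  have "\<exists>k<n. v0 $ k \<noteq> 0"
  proof (rule ccontr)
    assume "\<not> (\<exists>k<n. v0 $ k \<noteq> 0)"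
    then have "v0 = 0\<^sub>v n" using v0(1) by (intro eq_vecI) auto
    with v0(2) show False by simp
  qed
  then obtain k0 where k0: "k0 < n" "v0 $ k0 \<noteq> 0" by blast
  have "cmod (v0 $ k0)^2 \<le> s" unfolding s_def by (rule member_le_sum) (use k0 in auto)
  moreover have "cmod (v0 $ k0)^2 > 0" using k0 by simp
  ultimately have spos: "s > 0" by linarith
  define c where "c = 1 / sqrt s"
  define v where "v = complex_of_real c \<cdot>\<^sub>v v0"
  have vc: "v \<in> carrier_vec n" unfolding v_def using v0(1) by simp
  have "(\<Sum>k<n. cmod (v $ k)^2) = (\<Sum>k<n. c^2 * cmod (v0 $ k)^2)"
    unfolding v_def using v0(1) by (intro sum.cong refl) (auto simp: norm_mult power_mult_distrib)
  also have "\<dots> = c^2 * s" unfolding s_def by (simp add: sum_distrib_left)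
  also have "\<dots> = 1" unfolding c_def using spos by (simp add: power_divide)
  finally have nv: "(\<Sum>k<n. cmod (v $ k)^2) = 1" .
  have ev: "(\<Sum>l<n. A $$ (k,l) * v $ l) = e * v $ k" if k: "k < n" for k
  proof -
    have "(\<Sum>l<n. A $$ (k,l) * v $ l) = complex_of_real c * (\<Sum>l<n. A $$ (k,l) * v0 $ l)"
      unfolding v_def using v0(1) by (auto simp: sum_distrib_left intro!: sum.cong)
    also have "\<dots> = e * v $ k" using ev0[OF k] unfolding v_def using v0(1) k by simp
    finally show ?thesis .
  qed
  show ?thesis using vc nv ev by blast
qed


declare sum.lessThan_Suc[simp del]

lemma assoc5:
  assumes "P \<in> carrier_mat n n" "Q \<in> carrier_mat n n" "A \<in> carrier_mat n n" "R \<in> carrier_mat n n" "S \<in> carrier_mat n n"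
  shows "(P * Q) * A * (R * S) = P * (Q * A * R) * S"
proof -
  have "(P * Q) * A * (R * S) = P * (Q * A) * (R * S)" using assms by (simp add: assoc_mult_mat[of P n n Q n])
  also have "\<dots> = P * ((Q * A) * (R * S))" using assms by (intro assoc_mult_mat[of _ n n _ n _ n]) auto
  also have "(Q * A) * (R * S) = (Q * A * R) * S" using assms by (intro assoc_mult_mat[of _ n n _ n _ n, symmetric]) auto
  also have "P * (Q * A * R * S) = P * (Q * A * R) * S" using assms by (intro assoc_mult_mat[of _ n n _ n _ n, symmetric]) auto
  finally show ?thesis .
qed

lemma spectral:
  assumes "A \<in> carrier_mat n n" "herm n A"
  shows "\<exists>U. U \<in> carrier_mat n n \<and> adj U * U = 1\<^sub>m n \<and>
    (\<forall>i<n. \<forall>j<n. i \<noteq> j \<longrightarrow> (adj U * A * U) $$ (i,j) = 0) \<and> (\<forall>i<n. Im ((adj U * A * U) $$ (i,i)) = 0)"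
  using assms
proof (induction n arbitrary: A)
  case 0
  show ?case by (intro exI[of _ "1\<^sub>m 0"]) (auto intro!: eq_matI)
next
  case (Suc m)
  let ?n = "Suc m"
  from Suc.prems have A: "A \<in> carrier_mat ?n ?n" and h: "herm ?n A" by auto
  obtain v e where v: "v \<in> carrier_vec ?n" "(\<Sum>k<?n. cmod (v$k)^2) = 1"
    and ev: "\<forall>k<?n. (\<Sum>l<?n. A$$(k,l) * v$l) = e * v$k" using unit_eigvec[OF A] by auto
  obtain W where W: "W \<in> carrier_mat ?n ?n" "adj W * W = 1\<^sub>m ?n" and Wv: "\<forall>k<?n. W$$(k,0) = v$k"
    using onb_extend[OF v] by blast
  define A' where "A' = adj W * A * W"
  have aW: "adj W \<in> carrier_mat ?n ?n" using W(1) by simp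
  have A'c: "A' \<in> carrier_mat ?n ?n" unfolding A'_def using aW W(1) A by (meson mult_carrier_mat)
  have hA': "herm ?n A'" using herm_triple[OF W(1) A h] A'_def by simp
  have WW: "(\<Sum>k<?n. cnj (W$$(k,i)) * W$$(k,j)) = (if i = j then 1 else 0)" if "i<?n" "j<?n" for i j
  proof -
    have "(adj W * W) $$ (i,j) = (\<Sum>k<?n. cnj (W$$(k,i)) * W$$(k,j))"
      using W that by (subst mult_index[of _ ?n ?n _ ?n]) auto
    then show ?thesis using W(2) that by simp
  qed
  have col0: "A'$$(i,0) = (if i = 0 then e else 0)" if i: "i < ?n" for i
  proof -
    have "A'$$(i,0) = (\<Sum>k<?n. \<Sum>l<?n. cnj (W$$(k,i)) * A$$(k,l) * W$$(l,0))"
      unfolding A'_def using triple_index[OF W(1) A i] by simp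
    also have "\<dots> = (\<Sum>k<?n. cnj (W$$(k,i)) * (\<Sum>l<?n. A$$(k,l) * v$l))"
      using Wv by (intro sum.cong refl) (simp add: sum_distrib_left mult.assoc)
    also have "\<dots> = (\<Sum>k<?n. e * (cnj (W$$(k,i)) * W$$(k,0)))"
      using ev Wv by (intro sum.cong refl) auto
    also have "\<dots> = e * (if i = 0 then 1 else 0)"
      using WW[OF i, of 0] by (simp add: sum_distrib_left[symmetric])
    finally show ?thesis by simp
  qed
  have hA'': "A'$$(j,i) = cnj (A'$$(i,j))" if "i < ?n" "j < ?n" for i j
    using hA' that unfolding herm_def by blast
  have "A'$$(0,0) = cnj (A'$$(0,0))" using hA''[of 0 0] by blast
  then have ereal: "cnj e = e" using col0[of 0] by simp
  have row0: "A'$$(0,j) = (if j = 0 then e else 0)" if j: "j < ?n" for j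
  proof -
    have "A'$$(0,j) = cnj (A'$$(j,0))" using hA''[of j 0] j by blast
    then show ?thesis using col0[OF j] ereal by simp
  qed
  define A3 where "A3 = mat m m (\<lambda>(i,j). A'$$(Suc i, Suc j))"
  have A3c: "A3 \<in> carrier_mat m m" unfolding A3_def by simp
  have hA3: "herm m A3" unfolding herm_def
  proof (intro allI impI)
    fix i j assume i: "i < m" and j: "j < m"
    have "A'$$(Suc j, Suc i) = cnj (A'$$(Suc i, Suc j))" using hA''[of "Suc i" "Suc j"] i j by blast
    then show "A3$$(j,i) = cnj (A3$$(i,j))" unfolding A3_def using i j by simp
  qed
  obtain V where V: "V \<in> carrier_mat m m" "adj V * V = 1\<^sub>m m"
    and Voff: "\<forall>i<m. \<forall>j<m. i \<noteq> j \<longrightarrow> (adj V * A3 * V) $$ (i,j) = 0"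
    and Vdiag: "\<forall>i<m. Im ((adj V * A3 * V) $$ (i,i)) = 0"
    using Suc.IH[OF A3c hA3] by blast
  define B where "B = mat ?n ?n (\<lambda>(i,j). if i = 0 \<and> j = 0 then 1 else if i = 0 \<or> j = 0 then 0 else V$$(i-1,j-1))"
  have Bc: "B \<in> carrier_mat ?n ?n" unfolding B_def by simp
  have B00: "B$$(0,0) = 1" and B0S: "\<And>j. j < m \<Longrightarrow> B$$(0,Suc j) = 0" and BS0: "\<And>i. i < m \<Longrightarrow> B$$(Suc i,0) = 0"
    and BSS: "\<And>i j. i < m \<Longrightarrow> j < m \<Longrightarrow> B$$(Suc i,Suc j) = V$$(i,j)"
    unfolding B_def by auto
  have VV: "(\<Sum>k<m. cnj (V$$(k,i)) * V$$(k,j)) = (if i = j then 1 else 0)" if "i<m" "j<m" for i j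
  proof -
    have "(adj V * V) $$ (i,j) = (\<Sum>k<m. cnj (V$$(k,i)) * V$$(k,j))"
      using V that by (subst mult_index[of _ m m _ m]) auto
    then show ?thesis using V(2) that by simp
  qed
  have BB: "adj B * B = 1\<^sub>m ?n"
  proof (rule eq_matI)
    fix i j assume "i < dim_row (1\<^sub>m ?n)" "j < dim_col (1\<^sub>m ?n)"
    then have i: "i < ?n" and j: "j < ?n" by auto
    have "(adj B * B) $$ (i,j) = (\<Sum>k<?n. cnj (B$$(k,i)) * B$$(k,j))"
      using Bc i j by (subst mult_index[of _ ?n ?n _ ?n]) auto
    also have "\<dots> = cnj (B$$(0,i)) * B$$(0,j) + (\<Sum>k<m. cnj (B$$(Suc k,i)) * B$$(Suc k,j))"
      by (simp add: sum.lessThan_Suc_shift)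
    also have "\<dots> = 1\<^sub>m ?n $$ (i,j)"
    proof (cases i; cases j)
      fix i' j' assume "i = Suc i'" "j = Suc j'"
      then show ?thesis using i j B0S BSS VV[of i' j'] by simp
    qed (use i j B00 B0S BS0 in auto)
    finally show "(adj B * B) $$ (i,j) = 1\<^sub>m ?n $$ (i,j)" .
  qed (use Bc in auto)
  define U where "U = W * B"
  have Uc: "U \<in> carrier_mat ?n ?n" unfolding U_def using W Bc by simp
  have UU: "adj U * U = 1\<^sub>m ?n" unfolding U_def by (rule unitary_mult[OF W Bc BB])
  have D: "adj U * A * U = adj B * A' * B"
    unfolding U_def A'_def using W Bc A by (simp add: adj_mult assoc5[of _ ?n])
  have Dform: "(adj B * A' * B) $$ (i,j) = cnj (B$$(0,i)) * e * B$$(0,j) +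
      (\<Sum>k<m. \<Sum>l<m. cnj (B$$(Suc k,i)) * A3$$(k,l) * B$$(Suc l,j))" if i: "i < ?n" and j: "j < ?n" for i j
  proof -
    have "(adj B * A' * B) $$ (i,j) = (\<Sum>k<?n. \<Sum>l<?n. cnj (B$$(k,i)) * A'$$(k,l) * B$$(l,j))"
      by (rule triple_index[OF Bc A'c i j])
    also have "\<dots> = cnj (B$$(0,i)) * A'$$(0,0) * B$$(0,j) + (\<Sum>l<m. cnj (B$$(0,i)) * A'$$(0,Suc l) * B$$(Suc l,j))
       + ((\<Sum>k<m. cnj (B$$(Suc k,i)) * A'$$(Suc k,0) * B$$(0,j)) +
          (\<Sum>k<m. \<Sum>l<m. cnj (B$$(Suc k,i)) * A'$$(Suc k,Suc l) * B$$(Suc l,j)))"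
      by (simp add: sum.lessThan_Suc_shift sum.distrib)
    also have "\<dots> = cnj (B$$(0,i)) * e * B$$(0,j) +
      (\<Sum>k<m. \<Sum>l<m. cnj (B$$(Suc k,i)) * A3$$(k,l) * B$$(Suc l,j))"
      using row0 col0 unfolding A3_def by simp
    finally show ?thesis .
  qed
  have Doff: "\<forall>i<?n. \<forall>j<?n. i \<noteq> j \<longrightarrow> (adj U * A * U) $$ (i,j) = 0"
  proof (intro allI impI)
    fix i j assume i: "i < ?n" and j: "j < ?n" and ij: "i \<noteq> j"
    show "(adj U * A * U) $$ (i,j) = 0"
      unfolding D Dform[OF i j]
    proof (cases i; cases j)
      fix i' j' assume ii: "i = Suc i'" and jj: "j = Suc j'"
      have "(\<Sum>k<m. \<Sum>l<m. cnj (B$$(Suc k,i)) * A3$$(k,l) * B$$(Suc l,j)) = (adj V * A3 * V) $$ (i',j')"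
        using ii jj i j BSS by (simp add: triple_index[OF V(1) A3c])
      then show "cnj (B$$(0,i)) * e * B$$(0,j) + (\<Sum>k<m. \<Sum>l<m. cnj (B$$(Suc k,i)) * A3$$(k,l) * B$$(Suc l,j)) = 0"
        using ii jj i j ij Voff B0S by simp
    qed (use i j ij B00 B0S BS0 in auto)
  qed
  have Ddiag: "\<forall>i<?n. Im ((adj U * A * U) $$ (i,i)) = 0"
  proof (intro allI impI)
    fix i assume i: "i < ?n"
    have eq: "(adj U * A * U) $$ (i,i) = cnj (B$$(0,i)) * e * B$$(0,i) +
      (\<Sum>k<m. \<Sum>l<m. cnj (B$$(Suc k,i)) * A3$$(k,l) * B$$(Suc l,i))"
      unfolding D by (rule Dform[OF i i])
    show "Im ((adj U * A * U) $$ (i,i)) = 0"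
    proof (cases i)
      case 0
      have "Im (cnj e) = Im e" using ereal by simp
      then have "Im e = 0" by simp
      then show ?thesis using eq 0 B00 BS0 by simp
    next
      case (Suc i')
      have "(\<Sum>k<m. \<Sum>l<m. cnj (B$$(Suc k,i)) * A3$$(k,l) * B$$(Suc l,i)) = (adj V * A3 * V) $$ (i',i')"
        using Suc i BSS by (simp add: triple_index[OF V(1) A3c])
      then show ?thesis using eq Suc i Vdiag B0S by simp
    qed
  qed
  show ?case using Uc UU Doff Ddiag by blast
qed


lemma proots_lin: "proots (\<Prod>a\<leftarrow>xs. [:- a, 1:]) = mset (xs :: complex list)"
proof (induction xs)
  case Nil
  then show ?case by simp
next
  case (Cons x xs)
  have nz: "(\<Prod>a\<leftarrow>xs. [:- a, 1:]) \<noteq> 0" by (auto simp: prod_list_zero_iff)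
  have e1: "(\<Prod>a\<leftarrow>x # xs. [:- a, 1:]) = [:-x,1:] * (\<Prod>a\<leftarrow>xs. [:- a, 1:])" by simp
  have nz1: "[:-x,1:] \<noteq> (0::complex poly)" by simp
  have "proots (\<Prod>a\<leftarrow>x # xs. [:- a, 1:]) = proots [:- x, 1:] + proots (\<Prod>a\<leftarrow>xs. [:- a, 1:])"
    unfolding e1 by (rule proots_mult[OF nz1 nz])
  then show ?case using Cons by (simp add: proots_linear_factor)
qed

lemma neg_trace_diag:
  assumes A: "A \<in> carrier_mat n n" and U: "U \<in> carrier_mat n n" "adj U * U = 1\<^sub>m n"
    and off: "\<forall>i<n. \<forall>j<n. i \<noteq> j \<longrightarrow> (adj U * A * U) $$ (i,j) = 0"
  shows "neg_trace A = (\<Sum>i<n. min (Re ((adj U * A * U) $$ (i,i))) 0)"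
proof -
  define D where "D = adj U * A * U"
  have aU: "adj U \<in> carrier_mat n n" using U by simp
  have Dc: "D \<in> carrier_mat n n" unfolding D_def using aU U A by (meson mult_carrier_mat)
  have UU': "U * adj U = 1\<^sub>m n" by (rule unitary_right[OF U])
  have "U * D * adj U = (U * adj U) * A * (U * adj U)"
    unfolding D_def using U aU A by (simp add: assoc5[of _ n])
  also have "\<dots> = A" using UU' A by simp
  finally have AD: "A = U * D * adj U" by simp
  have "similar_mat_wit A D U (adj U)"
    unfolding similar_mat_wit_def Let_def using A Dc U aU UU' AD by auto
  then have "similar_mat A D" unfolding similar_mat_def by blast
  then have cp: "char_poly A = char_poly D" by (rule char_poly_similar)
  have ut: "upper_triangular D" unfolding upper_triangular_def using Dc off D_def by auto
  have cpD: "char_poly D = (\<Prod>a\<leftarrow>diag_mat D. [:- a, 1:])"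
    by (rule char_poly_upper_triangular[OF Dc ut])
  have pr: "proots (char_poly A) = mset (diag_mat D)"
    unfolding cp cpD by (rule proots_lin)
  have "neg_trace A = sum_list (map (\<lambda>z. min (Re z) 0) (diag_mat D))"
    unfolding neg_trace_def pr by (simp only: mset_map[symmetric] sum_mset_sum_list)
  also have "\<dots> = (\<Sum>i<n. min (Re (D $$ (i,i))) 0)"
    unfolding diag_mat_def using Dc by (simp add: sum_list_distinct_conv_sum_set atLeast0LessThan)
  finally show ?thesis unfolding D_def .
qed


definition qf :: "nat \<Rightarrow> complex mat \<Rightarrow> (nat \<Rightarrow> complex) \<Rightarrow> complex" where
  "qf n X u = (\<Sum>x<n. \<Sum>y<n. cnj (u x) * X $$ (x,y) * u y)"

lemma row_norm:
  assumes X: "X \<in> carrier_mat n n" and XX: "X * adj X = 1\<^sub>m n" and k: "k < n"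
  shows "(\<Sum>i<n. cmod (X $$ (k,i))^2) = 1"
proof -
  have "(X * adj X) $$ (k,k) = 1" using XX k by simp
  moreover have "(X * adj X) $$ (k,k) = (\<Sum>i<n. X $$ (k,i) * cnj (X $$ (k,i)))"
    using X k by (subst mult_index[of _ n n _ n]) auto
  also have "\<dots> = of_real (\<Sum>i<n. cmod (X $$ (k,i))^2)"
    unfolding of_real_sum by (intro sum.cong refl) (metis complex_norm_square)
  ultimately show ?thesis by (metis of_real_eq_1_iff)
qed

lemma assoc4:
  assumes "P \<in> carrier_mat n n" "Q \<in> carrier_mat n n" "R \<in> carrier_mat n n" "S \<in> carrier_mat n n"
  shows "(P * Q) * (R * S) = P * (Q * R) * S"
proof -
  have "(P * Q) * (R * S) = P * (Q * (R * S))" using assms by (intro assoc_mult_mat[of _ n n _ n _ n]) auto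
  also have "Q * (R * S) = (Q * R) * S" using assms by (intro assoc_mult_mat[of _ n n _ n _ n, symmetric]) auto
  also have "P * (Q * R * S) = P * (Q * R) * S" using assms by (intro assoc_mult_mat[of _ n n _ n _ n, symmetric]) auto
  finally show ?thesis .
qed

lemma re_cnj_mult: "Im r = 0 \<Longrightarrow> Re (cnj z * r * z) = Re r * cmod z ^ 2"
  by (cases z; cases r) (simp add: cmod_def power2_eq_square algebra_simps)

lemma trace_compare:
  assumes H: "H \<in> carrier_mat n n" "herm n H" and M: "M \<in> carrier_mat n n" "herm n M"
    and w: "\<And>x. w x \<ge> 0"
    and ineq: "\<And>u. Re (qf n H u) \<ge> Re (qf n M u) - (\<Sum>x<n. w x * cmod (u x)^2)"
  shows "neg_trace H \<ge> neg_trace M - (\<Sum>x<n. w x)"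
proof -
  obtain U where U: "U \<in> carrier_mat n n" "adj U * U = 1\<^sub>m n"
    and Uoff: "\<forall>i<n. \<forall>j<n. i \<noteq> j \<longrightarrow> (adj U * H * U) $$ (i,j) = 0"
    using spectral[OF H] by blast
  obtain W where W: "W \<in> carrier_mat n n" "adj W * W = 1\<^sub>m n"
    and Woff: "\<forall>i<n. \<forall>j<n. i \<noteq> j \<longrightarrow> (adj W * M * W) $$ (i,j) = 0"
    and Wdiag: "\<forall>i<n. Im ((adj W * M * W) $$ (i,i)) = 0"
    using spectral[OF M] by blast
  define D where "D = adj U * H * U"
  define E where "E = adj W * M * W"
  define lam where "lam i = Re (D $$ (i,i))" for i
  define mu where "mu k = Re (E $$ (k,k))" for k
  define S where "S = {i. i < n \<and> lam i < 0}"
  have S: "S \<subseteq> {..<n}" "finite S" unfolding S_def by auto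
  have aU: "adj U \<in> carrier_mat n n" and aW: "adj W \<in> carrier_mat n n" using U W by auto
  have UU': "U * adj U = 1\<^sub>m n" by (rule unitary_right[OF U])
  have WW': "W * adj W = 1\<^sub>m n" by (rule unitary_right[OF W])
  have ntH: "neg_trace H = (\<Sum>i<n. min (lam i) 0)"
    unfolding lam_def D_def by (rule neg_trace_diag[OF H(1) U Uoff])
  have ntM: "neg_trace M = (\<Sum>k<n. min (mu k) 0)"
    unfolding mu_def E_def by (rule neg_trace_diag[OF M(1) W Woff])
  have "(\<Sum>i<n. min (lam i) 0) = (\<Sum>i<n. if lam i < 0 then lam i else 0)"
    by (intro sum.cong refl) auto
  also have "\<dots> = (\<Sum>i\<in>S. lam i)" unfolding S_def by (simp add: sum.inter_filter[symmetric] lessThan_def)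
  finally have ntH2: "neg_trace H = (\<Sum>i\<in>S. lam i)" using ntH by simp
  define u where "u i = (\<lambda>k. U $$ (k,i))" for i
  have lamQ: "lam i = Re (qf n H (u i))" if "i < n" for i
    unfolding lam_def D_def qf_def u_def using triple_index[OF U(1) H(1) that that] by simp
  define C where "C = adj W * U"
  have Cc: "C \<in> carrier_mat n n" unfolding C_def using aW U by (meson mult_carrier_mat)
  have CC: "C * adj C = 1\<^sub>m n"
  proof -
    have "C * adj C = (adj W * U) * (adj U * W)"
      unfolding C_def adj_mult[OF aW U(1)] by simp
    also have "\<dots> = adj W * (U * adj U) * W"
      by (rule assoc4[OF aW U(1) aU W(1)])
    finally show ?thesis using UU' W by simp
  qed
  have ME: "M = W * E * adj W"
  proof -
    have "W * E * adj W = (W * adj W) * M * (W * adj W)"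
      unfolding E_def using W aW M by (simp add: assoc5[of _ n])
    then show ?thesis using WW' M by simp
  qed
  have Ec: "E \<in> carrier_mat n n" unfolding E_def using aW W M by (meson mult_carrier_mat)
  have UMU: "adj U * M * U = adj C * E * C"
    unfolding ME C_def adj_mult[OF aW U(1)] adj_adj using U aU W aW Ec by (simp add: assoc5[of _ n])
  have QM: "Re (qf n M (u i)) = (\<Sum>k<n. mu k * cmod (C $$ (k,i))^2)" if i: "i < n" for i
  proof -
    have "qf n M (u i) = (adj U * M * U) $$ (i,i)"
      unfolding qf_def u_def using triple_index[OF U(1) M(1) i i] by simp
    also have "\<dots> = (\<Sum>k<n. \<Sum>l<n. cnj (C $$ (k,i)) * E $$ (k,l) * C $$ (l,i))"
      unfolding UMU by (rule triple_index[OF Cc Ec i i])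
    also have "\<dots> = (\<Sum>k<n. cnj (C $$ (k,i)) * E $$ (k,k) * C $$ (k,i))"
    proof (intro sum.cong refl)
      fix k assume k: "k \<in> {..<n}"
      have "(\<Sum>l<n. cnj (C $$ (k,i)) * E $$ (k,l) * C $$ (l,i)) =
            (\<Sum>l\<in>{k}. cnj (C $$ (k,i)) * E $$ (k,l) * C $$ (l,i))"
        by (rule sum.mono_neutral_right) (use k Woff E_def in auto)
      then show "(\<Sum>l<n. cnj (C $$ (k,i)) * E $$ (k,l) * C $$ (l,i)) = cnj (C $$ (k,i)) * E $$ (k,k) * C $$ (k,i)"
        by simp
    qed
    finally have "Re (qf n M (u i)) = (\<Sum>k<n. Re (cnj (C $$ (k,i)) * E $$ (k,k) * C $$ (k,i)))"
      by simp
    also have "\<dots> = (\<Sum>k<n. mu k * cmod (C $$ (k,i))^2)"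
      unfolding mu_def by (intro sum.cong refl re_cnj_mult) (use Wdiag E_def in auto)
    finally show ?thesis .
  qed
  have part1: "(\<Sum>i\<in>S. Re (qf n M (u i))) \<ge> neg_trace M"
  proof -
    have "(\<Sum>i\<in>S. Re (qf n M (u i))) = (\<Sum>i\<in>S. \<Sum>k<n. mu k * cmod (C $$ (k,i))^2)"
      using S QM by (intro sum.cong refl) auto
    also have "\<dots> = (\<Sum>k<n. mu k * (\<Sum>i\<in>S. cmod (C $$ (k,i))^2))"
      by (subst sum.swap) (simp add: sum_distrib_left)
    also have "\<dots> \<ge> (\<Sum>k<n. min (mu k) 0)"
    proof (rule sum_mono)
      fix k assume k: "k \<in> {..<n}"
      define t where "t = (\<Sum>i\<in>S. cmod (C $$ (k,i))^2)"
      have t0: "t \<ge> 0" unfolding t_def by (intro sum_nonneg) auto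
      have "t \<le> (\<Sum>i<n. cmod (C $$ (k,i))^2)" unfolding t_def
        by (rule sum_mono2) (use S in auto)
      also have "\<dots> = 1" using row_norm[OF Cc CC] k by simp
      finally have t1: "t \<le> 1" .
      show "min (mu k) 0 \<le> mu k * t"
      proof (cases "mu k \<ge> 0")
        case True then show ?thesis using t0 by simp
      next
        case False
        then have "mu k * t \<ge> mu k * 1" using t1 by (intro mult_left_mono_neg) auto
        then show ?thesis by simp
      qed
    qed
    finally show ?thesis using ntM by simp
  qed
  have part2: "(\<Sum>i\<in>S. \<Sum>x<n. w x * cmod (u i x)^2) \<le> (\<Sum>x<n. w x)"
  proof -
    have "(\<Sum>i\<in>S. \<Sum>x<n. w x * cmod (u i x)^2) = (\<Sum>x<n. w x * (\<Sum>i\<in>S. cmod (U $$ (x,i))^2))"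
      unfolding u_def by (subst sum.swap) (simp add: sum_distrib_left)
    also have "\<dots> \<le> (\<Sum>x<n. w x * 1)"
    proof (rule sum_mono)
      fix x assume x: "x \<in> {..<n}"
      have "(\<Sum>i\<in>S. cmod (U $$ (x,i))^2) \<le> (\<Sum>i<n. cmod (U $$ (x,i))^2)"
        by (rule sum_mono2) (use S in auto)
      also have "\<dots> = 1" using row_norm[OF U(1) UU'] x by simp
      finally show "w x * (\<Sum>i\<in>S. cmod (U $$ (x,i))^2) \<le> w x * 1" using w[of x] by (intro mult_left_mono) auto
    qed
    finally show ?thesis by simp
  qed
  have "neg_trace H = (\<Sum>i\<in>S. Re (qf n H (u i)))" using ntH2 lamQ S by (auto intro!: sum.cong)
  also have "\<dots> \<ge> (\<Sum>i\<in>S. Re (qf n M (u i)) - (\<Sum>x<n. w x * cmod (u i x)^2))"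
    by (intro sum_mono ineq)
  finally have "neg_trace H \<ge> (\<Sum>i\<in>S. Re (qf n M (u i))) - (\<Sum>i\<in>S. \<Sum>x<n. w x * cmod (u i x)^2)"
    by (simp add: sum_subtractf)
  then show ?thesis using part1 part2 by linarith
qed


lemma H_carrier: "Kmu L d \<mu> + complex_of_real U \<cdot>\<^sub>m mult_op (lat_size L d) r \<in> carrier_mat (lat_size L d) (lat_size L d)"
  unfolding Kmu_def lap_def hop_def mult_op_def by auto

lemma H_entry:
  assumes x: "x < lat_size L d" and y: "y < lat_size L d"
  shows "(Kmu L d \<mu> + complex_of_real U \<cdot>\<^sub>m mult_op (lat_size L d) r) $$ (x,y) =
    complex_of_real ((if x = y then 2 * real d - \<mu> + U * r x else 0) - (if tdist L d x y = 1 then 1 else 0))"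
  using x y unfolding Kmu_def lap_def hop_def mult_op_def by auto

lemma P_entry:
  assumes H: "H \<in> carrier_mat N N" and x: "x < N" and y: "y < N"
  shows "(proj N Om * H * proj N Om) $$ (x,y) = (if x \<in> Om \<and> y \<in> Om then H $$ (x,y) else 0)"
proof -
  have Pc: "proj N Om \<in> carrier_mat N N" unfolding proj_def by simp
  have PH: "(proj N Om * H) $$ (x,l) = (if x \<in> Om then H $$ (x,l) else 0)" if l: "l < N" for l
  proof -
    have "(proj N Om * H) $$ (x,l) = (\<Sum>k<N. proj N Om $$ (x,k) * H $$ (k,l))"
      using Pc H x l by (intro mult_index) auto
    also have "\<dots> = (\<Sum>k<N. if k = x then (if x \<in> Om then H $$ (x,l) else 0) else 0)"
      using x unfolding proj_def by (intro sum.cong refl) auto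
    also have "\<dots> = (if x \<in> Om then H $$ (x,l) else 0)" using x by simp
    finally show ?thesis .
  qed
  have "(proj N Om * H * proj N Om) $$ (x,y) = (\<Sum>l<N. (proj N Om * H) $$ (x,l) * proj N Om $$ (l,y))"
    using Pc H x y by (intro mult_index[of _ N N]) auto
  also have "\<dots> = (\<Sum>l<N. if l = y then (if x \<in> Om \<and> y \<in> Om then H $$ (x,y) else 0) else 0)"
    using x y PH unfolding proj_def by (intro sum.cong refl) auto
  also have "\<dots> = (if x \<in> Om \<and> y \<in> Om then H $$ (x,y) else 0)" using y by simp
  finally show ?thesis .
qed

lemma pair_ineq:
  fixes a b :: complex and s :: real
  assumes s: "s > 0"
  shows "Re (cnj a * b) \<le> s / 2 * cmod a ^ 2 + 1 / (2 * s) * cmod b ^ 2"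
proof -
  have "Re (cnj a * b) \<le> cmod (cnj a * b)" by (rule complex_Re_le_cmod)
  also have "\<dots> = cmod a * cmod b" by (simp add: norm_mult)
  also have "\<dots> \<le> s / 2 * cmod a ^ 2 + 1 / (2 * s) * cmod b ^ 2"
  proof -
    have "0 \<le> (s * cmod a - cmod b)^2 / (2 * s)" using s by simp
    also have "(s * cmod a - cmod b)^2 / (2 * s) = s / 2 * cmod a ^ 2 + 1 / (2 * s) * cmod b ^ 2 - cmod a * cmod b"
      using s by (simp add: field_simps power2_eq_square)
    finally show ?thesis by simp
  qed
  finally show ?thesis .
qed

lemma qf_ineq:
  fixes N :: nat and Om Bd :: "nat set" and H M :: "complex mat" and a w :: "nat \<Rightarrow> real"
    and T :: "nat \<Rightarrow> nat \<Rightarrow> real" and \<epsilon> K C :: real and u :: "nat \<Rightarrow> complex"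
  assumes Hent: "\<And>x y. x < N \<Longrightarrow> y < N \<Longrightarrow> H $$ (x,y) = of_real ((if x = y then a x else 0) - T x y)"
    and Ment: "\<And>x y. x < N \<Longrightarrow> y < N \<Longrightarrow> M $$ (x,y) = (if x \<in> Om \<and> y \<in> Om then H $$ (x,y) else 0)"
    and T01: "\<And>x y. T x y = 0 \<or> T x y = 1" and Tsym: "\<And>x y. T x y = T y x"
    and Teps: "\<And>x y. T x y = 1 \<Longrightarrow> \<epsilon> > 0" and eps0: "\<epsilon> \<ge> 0"
    and nb: "\<And>x. x < N \<Longrightarrow> (\<Sum>y<N. T x y) \<le> K"
    and ax: "\<And>x. x < N \<Longrightarrow> x \<notin> Om \<Longrightarrow> a x \<ge> K * (1 + 1 / \<epsilon>)"
    and bd: "\<And>x y. x \<in> Om \<Longrightarrow> x \<notin> Bd \<Longrightarrow> y < N \<Longrightarrow> y \<notin> Om \<Longrightarrow> T x y = 0"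
    and CK: "\<epsilon> * K \<le> C"
    and w: "\<And>x. w x = (if x \<in> Bd then C else 0)"
  shows "Re (qf N H u) \<ge> Re (qf N M u) - (\<Sum>x<N. w x * cmod (u x)^2)"
proof -
  define E where "E x y = (\<not> (x \<in> Om \<and> y \<in> Om))" for x y
  define R where "R x y = Re (cnj (u x) * u y)" for x y
  define nr where "nr x = cmod (u x)^2" for x
  define f where "f x y = (if x \<in> Om then \<epsilon> / 2 else if y \<in> Om then 1 / (2 * \<epsilon>) else 1 / 2)" for x y
  have Rxx: "R x x = nr x" for x unfolding R_def nr_def
    by (metis Re_complex_of_real complex_norm_square mult.commute)
  have K0: "K \<ge> 0" if "x < N" for x using nb[OF that] T01 by (smt (verit) sum_nonneg)
  have "Re (qf N H u) - Re (qf N M u) = (\<Sum>x<N. \<Sum>y<N. (if E x y then (if x = y then a x else 0) - T x y else 0) * R x y)"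
  proof -
    have "Re (qf N H u) - Re (qf N M u) = (\<Sum>x<N. \<Sum>y<N. Re (cnj (u x) * H $$ (x,y) * u y) - Re (cnj (u x) * M $$ (x,y) * u y))"
      unfolding qf_def by (simp add: sum_subtractf)
    also have "\<dots> = (\<Sum>x<N. \<Sum>y<N. (if E x y then (if x = y then a x else 0) - T x y else 0) * R x y)"
    proof (intro sum.cong refl)
      fix x y assume x: "x \<in> {..<N}" and y: "y \<in> {..<N}"
      have e: "Re (cnj (u x) * complex_of_real h * u y) = h * R x y" for h
        unfolding R_def by (simp add: mult.commute mult.left_commute)
      show "Re (cnj (u x) * H $$ (x,y) * u y) - Re (cnj (u x) * M $$ (x,y) * u y) =
        (if E x y then (if x = y then a x else 0) - T x y else 0) * R x y"
      proof -
        define h where "h = (if x = y then a x else 0) - T x y"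
        have Hx: "H$$(x,y) = of_real h" using Hent x y h_def by simp
        have Mx: "M$$(x,y) = of_real (if x \<in> Om \<and> y \<in> Om then h else 0)" using Ment[of x y] x y Hx by simp
        have "Re (cnj (u x) * H $$ (x,y) * u y) = h * R x y" by (simp only: Hx e)
        moreover have "Re (cnj (u x) * M $$ (x,y) * u y) = (if x \<in> Om \<and> y \<in> Om then h else 0) * R x y"
          by (simp only: Mx e)
        ultimately show ?thesis by (auto simp: E_def h_def)
      qed
    qed
    finally show ?thesis .
  qed
  also have "\<dots> = (\<Sum>x<N. (if x \<notin> Om then a x * nr x else 0)) - (\<Sum>x<N. \<Sum>y<N. (if E x y then T x y * R x y else 0))"
  proof -
    have "(\<Sum>x<N. \<Sum>y<N. (if E x y then (if x = y then a x else 0) - T x y else 0) * R x y) =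
      (\<Sum>x<N. (\<Sum>y<N. (if y = x then (if x \<notin> Om then a x * nr x else 0) else 0)) - (\<Sum>y<N. (if E x y then T x y * R x y else 0)))"
    proof (intro sum.cong refl)
      fix x assume x: "x \<in> {..<N}"
      have "(\<Sum>y<N. (if E x y then (if x = y then a x else 0) - T x y else 0) * R x y) =
        (\<Sum>y<N. (if y = x then (if x \<notin> Om then a x * nr x else 0) else 0) - (if E x y then T x y * R x y else 0))"
        by (intro sum.cong refl) (auto simp: E_def Rxx algebra_simps)
      then show "(\<Sum>y<N. (if E x y then (if x = y then a x else 0) - T x y else 0) * R x y) =
        (\<Sum>y<N. (if y = x then (if x \<notin> Om then a x * nr x else 0) else 0)) - (\<Sum>y<N. (if E x y then T x y * R x y else 0))"
        by (simp only: sum_subtractf)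
    qed
    also have "\<dots> = (\<Sum>x<N. (if x \<notin> Om then a x * nr x else 0) - (\<Sum>y<N. (if E x y then T x y * R x y else 0)))"
      by (intro sum.cong refl) (simp add: sum.delta)
    finally show ?thesis by (simp add: sum_subtractf)
  qed
  finally have diff: "Re (qf N H u) - Re (qf N M u) = (\<Sum>x<N. (if x \<notin> Om then a x * nr x else 0)) - (\<Sum>x<N. \<Sum>y<N. (if E x y then T x y * R x y else 0))" .
  have pair: "(if E x y then T x y * R x y else 0) \<le> (if E x y then T x y * (f x y * nr x + f y x * nr y) else 0)" for x y
  proof (cases "E x y \<and> T x y = 1")
    case True
    then have ep: "\<epsilon> > 0" using Teps by blast
    have "R x y \<le> f x y * nr x + f y x * nr y"
    proof (cases "x \<in> Om")
      case True
      then have "y \<notin> Om" using \<open>E x y \<and> T x y = 1\<close> unfolding E_def by blast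
      then show ?thesis using True pair_ineq[OF ep, of "u x" "u y"] unfolding R_def nr_def f_def by simp
    next
      case False
      show ?thesis
      proof (cases "y \<in> Om")
        case True
        have "1 / \<epsilon> > 0" using ep by simp
        from pair_ineq[OF this, of "u x" "u y"] show ?thesis
          using True False ep unfolding R_def nr_def f_def by simp
      next
        case False2: False
        show ?thesis using pair_ineq[of 1 "u x" "u y"] False False2 unfolding R_def nr_def f_def by simp
      qed
    qed
    then show ?thesis using True by simp
  next
    case False
    then have "\<not> E x y \<or> T x y = 0" using T01 by blast
    then show ?thesis by auto
  qed
  define g where "g x = (\<Sum>y<N. if E x y then 2 * T x y * f x y else 0)" for x
  have "(\<Sum>x<N. \<Sum>y<N. (if E x y then T x y * R x y else 0)) \<le>
        (\<Sum>x<N. \<Sum>y<N. (if E x y then T x y * (f x y * nr x + f y x * nr y) else 0))"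
    by (intro sum_mono pair)
  also have "\<dots> = (\<Sum>x<N. \<Sum>y<N. (if E x y then T x y * f x y * nr x else 0)) +
                  (\<Sum>x<N. \<Sum>y<N. (if E x y then T x y * f y x * nr y else 0))"
    by (simp add: sum.distrib[symmetric] algebra_simps if_distrib cong: if_cong)
  also have "(\<Sum>x<N. \<Sum>y<N. (if E x y then T x y * f y x * nr y else 0)) =
             (\<Sum>x<N. \<Sum>y<N. (if E x y then T x y * f x y * nr x else 0))"
  proof -
    have sw: "(if E i j then T i j * f j i * nr j else 0) = (if E j i then T j i * f j i * nr j else 0)" for i j
    proof -
      have "T i j = T j i" by (rule Tsym)
      then show ?thesis by (auto simp: E_def)
    qed
    show ?thesis by (subst sum.swap) (simp only: sw)
  qed
  also have "(\<Sum>x<N. \<Sum>y<N. (if E x y then T x y * f x y * nr x else 0)) +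
             (\<Sum>x<N. \<Sum>y<N. (if E x y then T x y * f x y * nr x else 0)) = (\<Sum>x<N. g x * nr x)"
    unfolding g_def by (simp only: sum.distrib[symmetric] sum_distrib_right) (intro sum.cong refl, auto)
  finally have gb: "(\<Sum>x<N. \<Sum>y<N. (if E x y then T x y * R x y else 0)) \<le> (\<Sum>x<N. g x * nr x)" .
  have perx: "(if x \<notin> Om then a x * nr x else 0) - g x * nr x \<ge> - (w x * nr x)" if x: "x < N" for x
  proof -
    have nr0: "nr x \<ge> 0" unfolding nr_def by simp
    have T0: "T x y \<ge> 0" for y using T01[of x y] by auto
    show ?thesis
    proof (cases "x \<in> Om")
      case False
      have "g x \<le> (\<Sum>y<N. T x y * (1 + 1 / \<epsilon>))" unfolding g_def
      proof (rule sum_mono)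
        fix y
        show "(if E x y then 2 * T x y * f x y else 0) \<le> T x y * (1 + 1 / \<epsilon>)"
        proof (cases "T x y = 1")
          case True
          then have "\<epsilon> > 0" using Teps by blast
          then show ?thesis using True False unfolding E_def f_def by (auto simp: field_simps)
        next
          case False
          then show ?thesis using T01[of x y] by auto
        qed
      qed
      also have "\<dots> = (1 + 1 / \<epsilon>) * (\<Sum>y<N. T x y)" by (simp only: sum_distrib_left mult.commute)
      also have "\<dots> \<le> (1 + 1 / \<epsilon>) * K" using nb[OF x] eps0 by (intro mult_left_mono) auto
      also have "\<dots> \<le> a x" using ax[OF x False] by (simp add: mult.commute)
      finally have "g x \<le> a x" .
      then have "g x * nr x \<le> a x * nr x" using nr0 by (intro mult_right_mono) auto
      moreover have "w x \<ge> 0" using w[of x] CK mult_nonneg_nonneg[OF eps0 K0[OF x]] by auto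
      then have "w x * nr x \<ge> 0" using nr0 by simp
      ultimately show ?thesis using False by simp
    next
      case True
      have gx: "g x = (\<Sum>y<N. if y \<notin> Om then \<epsilon> * T x y else 0)"
        unfolding g_def E_def f_def using True by (intro sum.cong refl) auto
      show ?thesis
      proof (cases "x \<in> Bd")
        case False
        have "g x = 0" unfolding gx using bd[OF True False] by (intro sum.neutral) auto
        then show ?thesis using True False w[of x] by simp
      next
        case inB: True
        have "g x \<le> (\<Sum>y<N. \<epsilon> * T x y)" unfolding gx
          by (intro sum_mono) (use eps0 T0 in auto)
        also have "\<dots> = \<epsilon> * (\<Sum>y<N. T x y)" by (simp add: sum_distrib_left)
        also have "\<dots> \<le> \<epsilon> * K" using nb[OF x] eps0 by (intro mult_left_mono) auto
        also have "\<dots> \<le> w x" using CK w[of x] inB by simp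
        finally have "g x * nr x \<le> w x * nr x" using nr0 by (intro mult_right_mono) auto
        then show ?thesis using True by simp
      qed
    qed
  qed
  have f1: "Re (qf N H u) - Re (qf N M u) \<ge> (\<Sum>x<N. (if x \<notin> Om then a x * nr x else 0)) - (\<Sum>x<N. g x * nr x)"
    using diff gb by linarith
  have f2: "(\<Sum>x<N. (if x \<notin> Om then a x * nr x else 0)) - (\<Sum>x<N. g x * nr x) \<ge> (\<Sum>x<N. - (w x * nr x))"
    unfolding sum_subtractf[symmetric] by (intro sum_mono perx) auto
  have f3: "(\<Sum>x<N. - (w x * nr x)) = - (\<Sum>x<N. w x * cmod (u x)^2)" unfolding nr_def by (simp add: sum_negf)
  show ?thesis using f1 f2 f3 by linarith
qed


theorem lemma3p2:
  fixes L d :: nat and \<mu> U \<delta> :: real and \<gamma> :: "complex mat"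
  assumes "\<mu> > 0" and "U > 0" and "\<delta> > 2 * \<mu> / U"
    and "density_matrix (lat_size L d) \<gamma>"
  shows "neg_trace (Kmu L d \<mu> + complex_of_real U \<cdot>\<^sub>m mult_op (lat_size L d) (rho_tilde (lat_size L d) \<gamma> \<delta> \<mu> U))
      \<ge> neg_trace (proj (lat_size L d) (low_set (lat_size L d) \<gamma> \<delta>)
                    * (Kmu L d \<mu> + complex_of_real U \<cdot>\<^sub>m mult_op (lat_size L d) (rho_tilde (lat_size L d) \<gamma> \<delta> \<mu> U))
                    * proj (lat_size L d) (low_set (lat_size L d) \<gamma> \<delta>))
         - 8 * (real d)\<^sup>2 / (U * \<delta>) * real (card (bdry L d (low_set (lat_size L d) \<gamma> \<delta>)))"
proof -
  note mu = assms(1) and U0 = assms(2) and del = assms(3)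
  define N where "N = lat_size L d"
  define Om where "Om = low_set N \<gamma> \<delta>"
  define rt where "rt = rho_tilde N \<gamma> \<delta> \<mu> U"
  define Hm where "Hm = Kmu L d \<mu> + complex_of_real U \<cdot>\<^sub>m mult_op N rt"
  define Mm where "Mm = proj N Om * Hm * proj N Om"
  define T where "T x y = (if tdist L d x y = 1 then 1 else 0 :: real)" for x y
  define a where "a x = 2 * real d - \<mu> + U * rt x" for x
  define \<epsilon> where "\<epsilon> = 4 * real d / (U * \<delta>)"
  define K where "K = 2 * real d"
  define C where "C = 8 * (real d)\<^sup>2 / (U * \<delta>)"
  define Bd where "Bd = bdry L d Om"
  define w where "w x = (if x \<in> Bd then C else 0)" for x
  have Ud: "U * \<delta> > 2 * \<mu>" using del U0 by (simp add: field_simps)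
  have dpos: "\<delta> > 0" using Ud mu U0 by (smt (verit) mult_le_0_iff)
  have OmN: "Om \<subseteq> {..<N}" unfolding Om_def low_set_def by auto
  have Hc: "Hm \<in> carrier_mat N N" unfolding Hm_def N_def by (rule H_carrier)
  have Hent: "Hm $$ (x,y) = of_real ((if x = y then a x else 0) - T x y)" if "x < N" "y < N" for x y
    unfolding Hm_def a_def T_def using H_entry[of x L d y] that unfolding N_def by simp
  have Pc: "proj N Om \<in> carrier_mat N N" unfolding proj_def by simp
  have Mc: "Mm \<in> carrier_mat N N" unfolding Mm_def using Pc Hc by (meson mult_carrier_mat)
  have Ment: "Mm $$ (x,y) = (if x \<in> Om \<and> y \<in> Om then Hm $$ (x,y) else 0)" if "x < N" "y < N" for x y
    unfolding Mm_def by (rule P_entry[OF Hc that])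
  have Tsym: "T x y = T y x" for x y unfolding T_def using tdist_sym by metis
  have hH: "herm N Hm" unfolding herm_def
  proof (intro allI impI)
    fix i j assume "i < N" "j < N"
    then show "Hm $$ (j,i) = cnj (Hm $$ (i,j))" using Hent Tsym[of i j] by auto
  qed
  have hM: "herm N Mm" unfolding herm_def
  proof (intro allI impI)
    fix i j assume ij: "i < N" "j < N"
    have "Hm $$ (j,i) = cnj (Hm $$ (i,j))" using hH ij unfolding herm_def by blast
    then show "Mm $$ (j,i) = cnj (Mm $$ (i,j))" using Ment ij by auto
  qed
  have Teps: "\<epsilon> > 0" if "T x y = 1" for x y
  proof -
    have "tdist L d x y = 1" using that unfolding T_def by (auto split: if_splits)
    then have "d > 0" unfolding tdist_def by (cases d) auto
    then show ?thesis unfolding \<epsilon>_def using U0 dpos by simp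
  qed
  have eps0: "\<epsilon> \<ge> 0" unfolding \<epsilon>_def using U0 dpos by simp
  have nb: "(\<Sum>y<N. T x y) \<le> K" if "x < N" for x
  proof -
    have "(\<Sum>y<N. T x y) = real (card {y\<in>{..<N}. tdist L d x y = 1})"
      unfolding T_def by (simp add: sum.inter_filter[symmetric])
    also have "\<dots> \<le> real (2 * d)" using card_nbrs[of L d x] unfolding N_def by linarith
    finally show ?thesis unfolding K_def by simp
  qed
  have ax: "a x \<ge> K * (1 + 1 / \<epsilon>)" if x: "x < N" "x \<notin> Om" for x
  proof -
    have "rt x = dens \<gamma> x" unfolding rt_def rho_tilde_def using x Om_def by simp
    moreover have "dens \<gamma> x \<ge> \<delta>" using x unfolding Om_def low_set_def by auto
    ultimately have "a x \<ge> 2 * real d - \<mu> + U * \<delta>" unfolding a_def using U0 by simp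
    moreover have "K * (1 + 1 / \<epsilon>) \<le> 2 * real d + U * \<delta> / 2"
    proof (cases "d = 0")
      case True then show ?thesis unfolding K_def using U0 dpos by simp
    next
      case False
      then have "K * (1 + 1 / \<epsilon>) = 2 * real d + U * \<delta> / 2"
        unfolding K_def \<epsilon>_def using U0 dpos by (simp add: field_simps)
      then show ?thesis by simp
    qed
    ultimately show ?thesis using Ud by linarith
  qed
  have bd: "T x y = 0" if "x \<in> Om" "x \<notin> Bd" "y < N" "y \<notin> Om" for x y
  proof (rule ccontr)
    assume "T x y \<noteq> 0"
    then have "tdist L d x y = 1" unfolding T_def by (auto split: if_splits)
    then have "x \<in> bdry L d Om" using in_bdry[of Om L d x y] OmN that unfolding N_def by blast
    then show False using that unfolding Bd_def by blast
  qed
  have CK: "\<epsilon> * K \<le> C" unfolding \<epsilon>_def K_def C_def by (simp add: power2_eq_square)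
  have C0: "C \<ge> 0" unfolding C_def using U0 dpos by simp
  have ineq: "Re (qf N Hm u) \<ge> Re (qf N Mm u) - (\<Sum>x<N. w x * cmod (u x)^2)" for u
    by (rule qf_ineq[OF Hent Ment _ Tsym Teps eps0 nb ax bd CK w_def]) (auto simp: T_def)
  have tc: "neg_trace Hm \<ge> neg_trace Mm - (\<Sum>x<N. w x)"
    by (rule trace_compare[OF Hc hH Mc hM _ ineq]) (use C0 in \<open>simp add: w_def\<close>)
  have BdN: "Bd \<subseteq> {..<N}" unfolding Bd_def bdry_def using OmN by auto
  have "(\<Sum>x<N. w x) = (\<Sum>x\<in>{x\<in>{..<N}. x \<in> Bd}. C)"
    unfolding w_def by (subst sum.inter_filter) simp_all
  also have "{x\<in>{..<N}. x \<in> Bd} = Bd" using BdN by auto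
  finally have sw: "(\<Sum>x<N. w x) = C * real (card Bd)" by simp
  show ?thesis using tc sw unfolding Hm_def Mm_def N_def Om_def rt_def Bd_def C_def by (simp add: mult.commute)
qed

end
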